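(* Let $\gamma\in\,]0,+\infty[$ and let $h\colon\mathbb{R}\to\mathbb{R}\colon v\mapsto\log(1+\exp(-v))$. Then, as $v\to-\infty$, $$\mathrm{prox}_{\gamma h}(v)=v+\gamma\big(1-\exp(\gamma+v)+(1+\gamma)\exp(2(\gamma+v))\big)+o(\exp(2v)),$$ where $o(\exp(2v))$ denotes a function $F$ with $F(v)/\exp(2v)\to0$ as $v\to-\infty$.
   Context: For a convex function $\psi\colon\mathbb{R}\to\mathbb{R}$, $\mathrm{prox}_\psi(v)$ is the unique minimizer over $p\in\mathbb{R}$ of $\frac12(p-v)^2+\psi(p)$. *)

theory Defs
  imports "HOL-Analysis.Analysis"
begin

definition prox :: "(real \<Rightarrow> real) \<Rightarrow> real \<Rightarrow> real" where
  "prox \<psi> v = (THE p. \<forall>q. (1/2) * (p - v)\<^sup>2 + \<psi> p \<le> (1/2) * (q - v)\<^sup>2 + \<psi> q)"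

end

theory Submission
  imports Defs
begin

lemma prox_char:
  fixes \<gamma> v :: real assumes g: "\<gamma> > 0"
  shows "\<exists>d. 0 < d \<and> d < \<gamma> \<and> d * (1 + exp (v + d)) = \<gamma> \<and>
              prox (\<lambda>x. \<gamma> * ln (1 + exp (- x))) v = v + d"
proof -
  have "\<exists>d. 0 \<le> d \<and> d \<le> \<gamma> \<and> d * (1 + exp (v + d)) = \<gamma>"
  proof (rule IVT')
    show "0 * (1 + exp (v + 0)) \<le> \<gamma>" using g by simp
    show "\<gamma> \<le> \<gamma> * (1 + exp (v + \<gamma>))" using g by (simp add: algebra_simps)
    show "0 \<le> \<gamma>" using g by simp
    show "continuous_on {0..\<gamma>} (\<lambda>d. d * (1 + exp (v + d)))"
      by (intro continuous_intros)
  qed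
  then obtain d where d: "0 \<le> d" "d \<le> \<gamma>" "d * (1 + exp (v + d)) = \<gamma>" by blast
  have d0: "0 < d" using d g by (cases "d = 0") auto
  have dg: "d < \<gamma>"
  proof (rule ccontr)
    assume "\<not> d < \<gamma>"
    then have "d = \<gamma>" using d by auto
    then have "\<gamma> * exp (v + \<gamma>) = 0" using d(3) by (simp add: algebra_simps)
    then show False using g by simp
  qed
  define F where "F q = (1/2) * (q - v)\<^sup>2 + \<gamma> * ln (1 + exp (- q))" for q
  define F' where "F' q = (q - v) - \<gamma> / (1 + exp q)" for q
  have D: "DERIV F q :> F' q" for q
  proof -
    have "DERIV F q :> (1/2) * (2 * (q - v)) + \<gamma> * ((- exp (- q)) / (1 + exp (- q)))"
      unfolding F_def
      by (auto intro!: derivative_eq_intros simp: add_pos_pos algebra_simps diff_divide_distrib)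
    moreover have "(1/2) * (2 * (q - v)) + \<gamma> * ((- exp (- q)) / (1 + exp (- q))) = F' q"
    proof -
      have h: "exp (- q) * (1 + exp q) = 1 + exp (- q)"
        using exp_minus_inverse[of q] by (simp add: algebra_simps)
      have p1: "1 + exp (- q) > 0" "1 + exp q > 0" by (auto intro: add_pos_pos)
      have "exp (- q) / (1 + exp (- q)) = 1 / (1 + exp q)"
        using h p1 by (simp add: divide_eq_eq eq_divide_eq)
      then have "(- exp (- q)) / (1 + exp (- q)) = - (1 / (1 + exp q))"
        by (metis minus_divide_left)
      then show ?thesis unfolding F'_def by simp
    qed
    ultimately show ?thesis by simp
  qed
  define p where "p = v + d"
  have dd: "\<gamma> / (1 + exp p) = d"
  proof -
    have "1 + exp p > 0" by (simp add: add_pos_pos)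
    then show ?thesis using d(3) unfolding p_def by (simp add: divide_eq_eq add.commute)
  qed
  have key: "F p < F q" if "q \<noteq> p" for q
  proof (cases "p < q")
    case True
    obtain z where z: "p < z" "z < q" "F q - F p = (q - p) * F' z"
      using MVT2[OF True, of F F'] D by blast
    have "\<gamma> / (1 + exp z) < \<gamma> / (1 + exp p)"
      using g z(1) by (intro divide_strict_left_mono) (auto simp: add_pos_pos)
    then have "F' z > 0" unfolding F'_def using dd z(1) unfolding p_def by linarith
    then have "(q - p) * F' z > 0" using True by (simp add: mult_pos_pos)
    then show ?thesis using z by linarith
  next
    case False
    then have qp: "q < p" using that by auto
    obtain z where z: "q < z" "z < p" "F p - F q = (p - q) * F' z"
      using MVT2[OF qp, of F F'] D by blast
    have "\<gamma> / (1 + exp p) < \<gamma> / (1 + exp z)"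
      using g z(2) by (intro divide_strict_left_mono) (auto simp: add_pos_pos)
    then have "F' z < 0" unfolding F'_def using dd z(2) unfolding p_def by linarith
    then have "(p - q) * F' z < 0" using qp by (simp add: mult_pos_neg)
    then show ?thesis using z by simp
  qed
  have "prox (\<lambda>x. \<gamma> * ln (1 + exp (- x))) v = p"
    unfolding prox_def
  proof (rule the_equality)
    show "\<forall>q. 1/2 * (p - v)\<^sup>2 + \<gamma> * ln (1 + exp (- p)) \<le> 1/2 * (q - v)\<^sup>2 + \<gamma> * ln (1 + exp (- q))"
      using key unfolding F_def by (metis less_imp_le order_refl)
    fix p' assume "\<forall>q. 1/2 * (p' - v)\<^sup>2 + \<gamma> * ln (1 + exp (- p')) \<le> 1/2 * (q - v)\<^sup>2 + \<gamma> * ln (1 + exp (- q))"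
    then have "F p' \<le> F p" unfolding F_def by blast
    then show "p' = p" using key[of p'] by fastforce
  qed
  then show ?thesis using d0 dg d(3) unfolding p_def by blast
qed

theorem proposition3:
  fixes \<gamma> :: real and h :: "real \<Rightarrow> real"
  assumes "\<gamma> > 0"
    and "\<And>v. h v = ln (1 + exp (- v))"
  shows "((\<lambda>v. (prox (\<lambda>x. \<gamma> * h x) v
             - (v + \<gamma> * (1 - exp (\<gamma> + v) + (1 + \<gamma>) * exp (2 * (\<gamma> + v)))))
           / exp (2 * v)) \<longlongrightarrow> 0) at_bot"
proof -
  have g: "\<gamma> > 0" by fact
  have hh: "(\<lambda>x. \<gamma> * h x) = (\<lambda>x. \<gamma> * ln (1 + exp (- x)))" using assms(2) by auto
  have "\<forall>v. \<exists>d. 0 < d \<and> d < \<gamma> \<and> d * (1 + exp (v + d)) = \<gamma> \<and>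
              prox (\<lambda>x. \<gamma> * ln (1 + exp (- x))) v = v + d"
    using prox_char[OF g] by blast
  from choice[OF this] obtain d where dd: "\<forall>v. 0 < d v \<and> d v < \<gamma> \<and> d v * (1 + exp (v + d v)) = \<gamma> \<and>
              prox (\<lambda>x. \<gamma> * ln (1 + exp (- x))) v = v + d v" by blast
  define a where "a v = exp (\<gamma> + v)" for v
  define \<delta> where "\<delta> v = \<gamma> - d v" for v
  define u where "u v = \<delta> v / a v" for v
  define w where "w v = (1 - exp (- \<delta> v)) / a v" for v
  have apos: "a v > 0" for v unfolding a_def by simp
  have dpos: "0 < d v" "d v < \<gamma>" for v using dd by auto
  have \<delta>pos: "\<delta> v > 0" for v using dpos unfolding \<delta>_def by simp
  have rel: "\<delta> v = a v * d v * exp (- \<delta> v)" for v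
  proof -
    have "exp (v + d v) = a v * exp (- \<delta> v)"
      unfolding a_def \<delta>_def by (simp add: exp_add[symmetric])
    moreover have "d v * (1 + exp (v + d v)) = \<gamma>" using dd by blast
    ultimately have "\<gamma> - d v = d v * (a v * exp (- \<delta> v))" by (simp add: algebra_simps)
    then show ?thesis unfolding \<delta>_def by (simp add: algebra_simps)
  qed
  have ueq: "u v = d v * exp (- \<delta> v)" for v
    unfolding u_def using rel[of v] apos[of v] by (simp add: field_simps)
  have a0: "(a \<longlongrightarrow> 0) at_bot"
  proof -
    have "((\<lambda>v. exp \<gamma> * exp v) \<longlongrightarrow> exp \<gamma> * 0) at_bot"
      by (intro tendsto_intros exp_at_bot)
    then show ?thesis unfolding a_def by (simp add: exp_add)
  qed
  have \<delta>le: "\<delta> v \<le> \<gamma> * a v" for v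
  proof -
    have "exp (- \<delta> v) \<le> 1" using \<delta>pos[of v] by simp
    then have "d v * exp (- \<delta> v) \<le> \<gamma> * 1"
      using dpos[of v] by (intro mult_mono) auto
    then have "a v * (d v * exp (- \<delta> v)) \<le> a v * \<gamma>"
      using apos[of v] by (intro mult_left_mono) auto
    then show ?thesis using rel[of v] by (simp add: algebra_simps)
  qed
  have \<delta>0: "(\<delta> \<longlongrightarrow> 0) at_bot"
  proof (rule tendsto_sandwich[of "\<lambda>_. 0" _ _ "\<lambda>v. \<gamma> * a v"])
    show "\<forall>\<^sub>F v in at_bot. 0 \<le> \<delta> v" using \<delta>pos by (simp add: less_imp_le)
    show "\<forall>\<^sub>F v in at_bot. \<delta> v \<le> \<gamma> * a v" using \<delta>le by simp
    show "((\<lambda>v. \<gamma> * a v) \<longlongrightarrow> 0) at_bot" using tendsto_mult_right_zero[OF a0] by simp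
  qed simp
  have d\<gamma>: "(d \<longlongrightarrow> \<gamma>) at_bot"
  proof -
    have "((\<lambda>v. \<gamma> - \<delta> v) \<longlongrightarrow> \<gamma> - 0) at_bot" by (intro tendsto_intros \<delta>0)
    then show ?thesis unfolding \<delta>_def by simp
  qed
  have u\<gamma>: "(u \<longlongrightarrow> \<gamma>) at_bot"
  proof -
    have "((\<lambda>v. d v * exp (- \<delta> v)) \<longlongrightarrow> \<gamma> * exp (- 0)) at_bot"
      by (intro tendsto_intros \<delta>0 d\<gamma>)
    moreover have "u = (\<lambda>v. d v * exp (- \<delta> v))" using ueq by (rule ext)
    ultimately show ?thesis by simp
  qed
  have w\<gamma>: "(w \<longlongrightarrow> \<gamma>) at_bot"
  proof (rule tendsto_sandwich[of "\<lambda>v. (1 - \<delta> v) * u v" _ _ u])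
    show "\<forall>\<^sub>F v in at_bot. (1 - \<delta> v) * u v \<le> w v"
    proof (intro always_eventually allI)
      fix v
      have e1: "1 + \<delta> v \<le> exp (\<delta> v)" using exp_ge_add_one_self by simp
      have "exp (- \<delta> v) = 1 / exp (\<delta> v)" by (simp add: exp_minus inverse_eq_divide)
      also have "\<dots> \<le> 1 / (1 + \<delta> v)" using e1 \<delta>pos[of v]
        by (intro divide_left_mono) auto
      also have "\<dots> \<le> 1 - \<delta> v + \<delta> v ^ 2"
        using \<delta>pos[of v] by (simp add: field_simps power2_eq_square power3_eq_cube)
      finally have "\<delta> v - \<delta> v ^ 2 \<le> 1 - exp (- \<delta> v)" by simp
      then have "(\<delta> v - \<delta> v ^ 2) / a v \<le> w v"
        unfolding w_def using apos[of v] by (intro divide_right_mono) auto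
      moreover have "(\<delta> v - \<delta> v ^ 2) / a v = (1 - \<delta> v) * u v"
        unfolding u_def by (simp add: field_simps power2_eq_square)
      ultimately show "(1 - \<delta> v) * u v \<le> w v" by simp
    qed
    show "\<forall>\<^sub>F v in at_bot. w v \<le> u v"
    proof (intro always_eventually allI)
      fix v
      have "1 - \<delta> v \<le> exp (- \<delta> v)" using exp_ge_add_one_self[of "- \<delta> v"] by simp
      then have "1 - exp (- \<delta> v) \<le> \<delta> v" by simp
      then show "w v \<le> u v" unfolding w_def u_def using apos[of v]
        by (intro divide_right_mono) auto
    qed
    have "((\<lambda>v. (1 - \<delta> v) * u v) \<longlongrightarrow> (1 - 0) * \<gamma>) at_bot"
      by (intro tendsto_intros \<delta>0 u\<gamma>)
    then show "((\<lambda>v. (1 - \<delta> v) * u v) \<longlongrightarrow> \<gamma>) at_bot" by simp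
  qed (rule u\<gamma>)
  have L: "((\<lambda>v. exp (2 * \<gamma>) * (u v + d v * w v - \<gamma> * (1 + \<gamma>))) \<longlongrightarrow>
            exp (2 * \<gamma>) * (\<gamma> + \<gamma> * \<gamma> - \<gamma> * (1 + \<gamma>))) at_bot"
    by (intro tendsto_intros u\<gamma> d\<gamma> w\<gamma>)
  have eq: "(prox (\<lambda>x. \<gamma> * h x) v
             - (v + \<gamma> * (1 - exp (\<gamma> + v) + (1 + \<gamma>) * exp (2 * (\<gamma> + v)))))
           / exp (2 * v) = exp (2 * \<gamma>) * (u v + d v * w v - \<gamma> * (1 + \<gamma>))" for v
  proof -
    have P: "prox (\<lambda>x. \<gamma> * h x) v = v + d v" using dd hh by simp
    have A2: "exp (2 * (\<gamma> + v)) = a v ^ 2" unfolding a_def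
      by (simp add: exp_double[symmetric])
    have E0: "exp (2 * (\<gamma> + v)) = exp (2 * \<gamma>) * exp (2 * v)"
      unfolding exp_add[symmetric] by (simp add: distrib_left)
    have E2: "exp (2 * v) = a v ^ 2 / exp (2 * \<gamma>)"
      unfolding A2[symmetric] E0 by simp
    have N: "d v - \<gamma> + \<gamma> * a v - \<gamma> * (1 + \<gamma>) * a v ^ 2
           = a v ^ 2 * (u v + d v * w v - \<gamma> * (1 + \<gamma>))"
    proof -
      have "a v ^ 2 * (u v + d v * w v) = a v * \<delta> v + a v * d v - a v * d v * exp (- \<delta> v)"
        unfolding u_def w_def using apos[of v] by (simp add: field_simps power2_eq_square)
      also have "\<dots> = a v * \<gamma> - \<delta> v" using rel[of v] unfolding \<delta>_def by (simp add: algebra_simps)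
      finally show ?thesis unfolding \<delta>_def by (simp add: algebra_simps)
    qed
    have "prox (\<lambda>x. \<gamma> * h x) v
             - (v + \<gamma> * (1 - exp (\<gamma> + v) + (1 + \<gamma>) * exp (2 * (\<gamma> + v))))
          = d v - \<gamma> + \<gamma> * a v - \<gamma> * (1 + \<gamma>) * a v ^ 2"
      unfolding P A2 a_def[symmetric] by (simp add: algebra_simps)
    also have "\<dots> = a v ^ 2 * (u v + d v * w v - \<gamma> * (1 + \<gamma>))" by (rule N)
    finally show ?thesis unfolding E2 using apos[of v] by simp
  qed
  have z: "exp (2 * \<gamma>) * (\<gamma> + \<gamma> * \<gamma> - \<gamma> * (1 + \<gamma>)) = 0" by (simp add: distrib_left)
  show ?thesis unfolding eq using L unfolding z .
qed

end
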